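(* Let $0<q<1$ and let ${\cal H}_n(z|q)=\sum_{k=0}^n\frac{(q;q)_n\,q^{-k/2}z^k}{(q;q)_k(q;q)_{n-k}}$ be the Rogers–Szegő polynomials, with orthonormal versions $\phi_n(z)=\frac{q^{n/2}}{\sqrt{(q;q)_n}}{\cal H}_n(z|q)$ (orthonormal on the unit circle with respect to $w(z)=\frac{(q^{1/2}z,q^{1/2}/z;q)_\infty}{2\pi(q;q)_\infty}$). Then $(D_q\phi_n)(z)=\frac{\sqrt{1-q^n}}{1-q}\phi_{n-1}(z)$ for $n\ge1$, and the $q$-discriminants are $$D(\phi_n,q)=\frac{(-q)^{n(n-1)/2}}{(1-q)^n}(q;q)_n\prod_{j=1}^{n-1}\frac{1}{(q;q)_j},\qquad D({\cal H}_n,q)=(-q)^{-n(n-1)/2}\Big[\frac{(q;q)_n}{1-q}\Big]^n\prod_{j=1}^{n-1}\frac{1}{(q;q)_j}.$$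
   Context: $(a;q)_0=1$, $(a;q)_n=\prod_{k=1}^n(1-aq^{k-1})$ for $n\ge1$ or $n=\infty$, and $(a,b;q)_n=(a;q)_n(b;q)_n$. $(D_qf)(z)=\frac{f(z)-f(qz)}{z-qz}$. For $f(z)=\gamma\prod_{j=1}^n(z-z_j)$, the $q$-discriminant is $D(f,q)=\gamma^{2n-2}q^{n(n-1)/2}\prod_{1\le j<k\le n}(q^{1/2}z_j-q^{-1/2}z_k)(q^{-1/2}z_j-q^{1/2}z_k)$. *)

theory Defs
  imports Complex_Main "HOL-Computational_Algebra.Polynomial"
begin

definition qpoch :: "real \<Rightarrow> real \<Rightarrow> nat \<Rightarrow> real" where
  "qpoch a q n = (\<Prod>k<n. (1 - a * q ^ k))"

definition rogers_szego :: "real \<Rightarrow> nat \<Rightarrow> complex poly" where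
  "rogers_szego q n = (\<Sum>k\<le>n. monom (complex_of_real
      (qpoch q q n * (1 / sqrt q) ^ k / (qpoch q q k * qpoch q q (n - k)))) k)"

definition rs_phi :: "real \<Rightarrow> nat \<Rightarrow> complex poly" where
  "rs_phi q n = smult (complex_of_real (sqrt q ^ n / sqrt (qpoch q q n))) (rogers_szego q n)"

definition qder :: "complex \<Rightarrow> (complex \<Rightarrow> complex) \<Rightarrow> complex \<Rightarrow> complex" where
  "qder q f z = (f z - f (q * z)) / (z - q * z)"

text \<open>The root list (with multiplicity) is chosen by SOME; the expression is symmetric in the roots.\<close>
definition qdisc :: "real \<Rightarrow> complex poly \<Rightarrow> complex" where
  "qdisc q f = (let n = degree f; g = lead_coeff f;
       zs = (SOME zs. length zs = n \<and> f = smult g (\<Prod>z\<leftarrow>zs. [:- z, 1:]));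
       s = complex_of_real (sqrt q)
     in g powi (2 * int n - 2) * complex_of_real (q ^ (n * (n - 1) div 2)) *
        (\<Prod>j<n. \<Prod>k\<in>{j<..<n}. (s * zs ! j - zs ! k / s) * (zs ! j / s - s * zs ! k)))"

end

theory Submission
  imports Defs "HOL-Computational_Algebra.Fundamental_Theorem_Algebra"
begin

lemma roots_exist:
  fixes p :: "complex poly"
  assumes "p \<noteq> 0"
  shows "\<exists>zs. length zs = degree p \<and> p = smult (lead_coeff p) (\<Prod>z\<leftarrow>zs. [:-z, 1:])"
proof -
  obtain roots where roots: "mset roots = proots p"
    using ex_mset by blast
  have "p = smult (lead_coeff p) (\<Prod>x\<in>#proots p. [:-x, 1:])"
    by (rule complex_poly_decompose_multiset [symmetric])
  also have "(\<Prod>x\<in>#proots p. [:-x, 1:]) = (\<Prod>x\<leftarrow>roots. [:-x, 1:])"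
    by (subst prod_mset_prod_list [symmetric]) (simp add: roots)
  finally have eq: "p = smult (lead_coeff p) (\<Prod>x\<leftarrow>roots. [:-x, 1:])" .
  have "degree p = length roots"
    using roots assms by (metis size_mset size_proots_complex)
  with eq show ?thesis by auto
qed

lemma poly_roots_list:
  fixes g x :: complex
  shows
  "poly (smult g (\<Prod>z\<leftarrow>zs. [:-z, 1:])) x = g * (\<Prod>j<length zs. x - zs ! j)"
proof -
  have "(\<Prod>j<length zs. - zs ! j + x) = (\<Prod>j<length zs. x - zs ! j)" by (intro prod.cong) auto
  then show ?thesis by (simp add: prod.list_conv_set_nth atLeast0LessThan poly_prod)
qed

lemma degree_roots_list:
  fixes g :: complex
  assumes "g \<noteq> 0"
  shows "degree (smult g (\<Prod>z\<leftarrow>zs. [:-z, 1:])) = length zs"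
    "lead_coeff (smult g (\<Prod>z\<leftarrow>zs. [:-z, 1:])) = g"
proof -
  show "degree (smult g (\<Prod>z\<leftarrow>zs. [:-z, 1:])) = length zs"
    using assms by (auto simp: prod.list_conv_set_nth atLeast0LessThan degree_prod_sum_eq)
  have "lead_coeff (\<Prod>i<length zs. [:-zs ! i, 1:]) = 1"
    by (simp only: lead_coeff_prod) simp
  then show "lead_coeff (smult g (\<Prod>z\<leftarrow>zs. [:-z, 1:])) = g"
    by (simp add: prod.list_conv_set_nth atLeast0LessThan)
qed

lemma pairs_prod:
  fixes F :: "nat \<Rightarrow> nat \<Rightarrow> 'a::comm_ring_1"
  shows "(\<Prod>j<n. \<Prod>k\<in>{j<..<n}. c * F j k * F k j) = c ^ (n * (n - 1) div 2) * (\<Prod>j<n. \<Prod>k\<in>{..<n}-{j}. F j k)"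
proof (induction n)
  case 0
  then show ?case by simp
next
  case (Suc n)
  have A: "(\<Prod>j<Suc n. \<Prod>k\<in>{j<..<Suc n}. c * F j k * F k j)
      = (\<Prod>j<n. c * F j n * F n j) * (\<Prod>j<n. \<Prod>k\<in>{j<..<n}. c * F j k * F k j)"
  proof -
    have "(\<Prod>j<Suc n. \<Prod>k\<in>{j<..<Suc n}. c * F j k * F k j) = (\<Prod>j<n. \<Prod>k\<in>{j<..<Suc n}. c * F j k * F k j)"
    proof -
      have "{n<..<Suc n} = {}" by auto
      then show ?thesis by simp
    qed
    also have "\<dots> = (\<Prod>j<n. (c * F j n * F n j) * (\<Prod>k\<in>{j<..<n}. c * F j k * F k j))"
    proof (rule prod.cong[OF refl])
      fix j assume "j \<in> {..<n}"
      then have "{j<..<Suc n} = insert n {j<..<n}" by auto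
      then show "(\<Prod>k\<in>{j<..<Suc n}. c * F j k * F k j) = (c * F j n * F n j) * (\<Prod>k\<in>{j<..<n}. c * F j k * F k j)"
        by simp
    qed
    finally show ?thesis by (simp add: prod.distrib)
  qed
  have B: "(\<Prod>j<Suc n. \<Prod>k\<in>{..<Suc n}-{j}. F j k)
      = (\<Prod>k<n. F n k) * (\<Prod>j<n. F j n) * (\<Prod>j<n. \<Prod>k\<in>{..<n}-{j}. F j k)"
  proof -
    have "{..<Suc n}-{n} = {..<n}" by auto
    then have "(\<Prod>j<Suc n. \<Prod>k\<in>{..<Suc n}-{j}. F j k) = (\<Prod>k<n. F n k) * (\<Prod>j<n. \<Prod>k\<in>{..<Suc n}-{j}. F j k)"
      by (simp add: mult.commute)
    also have "(\<Prod>j<n. \<Prod>k\<in>{..<Suc n}-{j}. F j k) = (\<Prod>j<n. F j n * (\<Prod>k\<in>{..<n}-{j}. F j k))"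
    proof (rule prod.cong[OF refl])
      fix j assume "j \<in> {..<n}"
      then have "{..<Suc n}-{j} = insert n ({..<n}-{j})" by auto
      then show "(\<Prod>k\<in>{..<Suc n}-{j}. F j k) = F j n * (\<Prod>k\<in>{..<n}-{j}. F j k)"
        by simp
    qed
    finally show ?thesis by (simp add: prod.distrib mult.assoc)
  qed
  have N: "Suc n * (Suc n - 1) div 2 = n * (n - 1) div 2 + n"
    by (induction n) auto
  show ?case unfolding A B Suc N
    by (simp add: prod.distrib power_add prod_constant mult_ac)
qed

lemma qdisc_core:
  fixes a :: "nat \<Rightarrow> complex" and g qc s :: complex and f :: "complex poly"
  assumes pf: "\<And>x. poly f x = g * (\<Prod>j<n. x - a j)"
    and g: "g \<noteq> 0" and f0: "poly f 0 \<noteq> 0" and n: "n \<ge> 1"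
    and s: "s * s = qc" "s \<noteq> 0" and q1: "qc \<noteq> 1"
  shows "g^(2*n-2) * qc^(n*(n-1) div 2) * (\<Prod>j<n. \<Prod>k\<in>{j<..<n}. (s * a j - a k / s) * (a j / s - s * a k))
       = (-1)^(n*(n-1) div 2) * g^(n-1) * (\<Prod>j<n. poly f (qc * a j)) / ((1-qc)^n * poly f 0)"
proof -
  define N where "N = n*(n-1) div 2"
  have qc0: "qc \<noteq> 0" using s by auto
  have fac: "(s*x - y/s)*(x/s - s*y) = (-1/qc) * (qc*x - y) * (qc*y - x)" for x y
    using s by (auto simp: field_simps)
  have P: "(\<Prod>j<n. \<Prod>k\<in>{j<..<n}. (s * a j - a k / s) * (a j / s - s * a k))
      = (-1/qc)^N * (\<Prod>j<n. \<Prod>k\<in>{..<n}-{j}. qc * a j - a k)"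
    unfolding fac N_def by (rule pairs_prod)
  have prodA: "poly f 0 = g * (-1)^n * (\<Prod>j<n. a j)"
  proof -
    have "(\<Prod>j<n. 0 - a j) = (\<Prod>j<n. (-1) * a j)" by simp
    also have "\<dots> = (-1)^n * (\<Prod>j<n. a j)" by (subst prod.distrib) simp
    finally show ?thesis using pf[of 0] by simp
  qed
  have a0: "a j \<noteq> 0" if "j < n" for j
  proof
    assume "a j = 0"
    then have "(\<Prod>j<n. a j) = 0" using that by (meson finite_lessThan lessThan_iff prod_zero_iff)
    then show False using prodA f0 by simp
  qed
  have each: "(\<Prod>k\<in>{..<n}-{j}. qc * a j - a k) = poly f (qc * a j) / (g * (qc - 1) * a j)"
    if "j < n" for j
  proof -
    have "poly f (qc * a j) = g * (\<Prod>k<n. qc * a j - a k)" by (rule pf)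
    also have "(\<Prod>k<n. qc * a j - a k) = (qc * a j - a j) * (\<Prod>k\<in>{..<n}-{j}. qc * a j - a k)"
      using that by (subst prod.remove[of _ j]) auto
    finally show ?thesis using g q1 a0[OF that] by (simp add: field_simps)
  qed
  have E: "(\<Prod>j<n. \<Prod>k\<in>{..<n}-{j}. qc * a j - a k)
      = (\<Prod>j<n. poly f (qc * a j)) / ((g * (qc - 1))^n * (\<Prod>j<n. a j))"
    by (simp add: each prod_dividef prod.distrib power_mult_distrib)
  have m1: "(qc - 1)^n = (-1)^n * (1 - qc)^n"
    by (metis minus_diff_eq mult_minus1 power_mult_distrib)
  have g2: "g^(2*n-2) = g^(n-1) * g^(n-1)"
    by (metis mult_2 diff_mult_distrib2 mult.right_neutral power_add)
  have qN: "qc^N * (-1/qc)^N = (-1)^N"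
    using qc0 by (simp add: power_mult_distrib[symmetric])
  have gn: "g^n = g^(n-1) * g" using n
    by (metis One_nat_def Suc_pred' less_eq_Suc_le power_Suc2)
  have A0: "(\<Prod>j<n. a j) \<noteq> 0" using a0 by simp
  have key: "M * M * Q * (X / ((M * g) * (m * R) * A)) = W * M * X / (R * (g * m * A))"
    if "M \<noteq> 0" "g \<noteq> 0" "A \<noteq> 0" "R \<noteq> 0" "m * m = 1" "Q = W"
    for M g A R m Q W X :: complex
  proof -
    have "m \<noteq> 0" using that by auto
    then show ?thesis using that by (simp add: field_simps)
  qed
  have "(1 - qc)^n \<noteq> 0" using q1 by simp
  moreover have "((-1)^n * (-1)^n :: complex) = 1" by (simp add: power_mult_distrib[symmetric])
  ultimately show ?thesis
    unfolding P E N_def[symmetric] prodA power_mult_distrib gn m1 g2 mult.assoc[of "g^(n-1) * g^(n-1)"] qN[symmetric]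
    using key[of "g^(n-1)" g "\<Prod>j<n. a j" "(1 - qc)^n" "(-1)^n" "qc^N * (-1/qc)^N" "qc^N * (-1/qc)^N"] g A0
    by (simp add: mult.assoc)
qed

lemma qdisc_formula:
  fixes f :: "complex poly" and q :: real
  assumes f: "f \<noteq> 0" and n: "degree f \<ge> 1" and f0: "poly f 0 \<noteq> 0" and q: "0 < q" "q \<noteq> 1"
  shows "\<exists>zs. length zs = degree f \<and> f = smult (lead_coeff f) (\<Prod>z\<leftarrow>zs. [:-z,1:]) \<and>
     qdisc q f = (-1)^(degree f*(degree f-1) div 2) * lead_coeff f^(degree f-1)
        * (\<Prod>j<degree f. poly f (of_real q * zs!j)) / ((1-of_real q)^(degree f) * poly f 0)"
proof -
  define n where "n = degree f"
  define g where "g = coeff f n"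
  define zs where "zs = (SOME zs. length zs = n \<and> f = smult g (\<Prod>z\<leftarrow>zs. [:- z, 1:]))"
  have zs: "length zs = n \<and> f = smult g (\<Prod>z\<leftarrow>zs. [:- z, 1:])"
    unfolding zs_def g_def n_def by (rule someI_ex) (rule roots_exist[OF f])
  have g0: "g \<noteq> 0" using f g_def n_def by simp
  have pf: "poly f x = g * (\<Prod>j<n. x - zs ! j)" for x
  proof -
    have "poly f x = poly (smult g (\<Prod>z\<leftarrow>zs. [:- z, 1:])) x" using zs by (rule arg_cong[OF conjunct2])
    also have "\<dots> = g * (\<Prod>j<length zs. x - zs ! j)" by (rule poly_roots_list)
    finally show ?thesis using zs by simp
  qed
  define s where "s = complex_of_real (sqrt q)"
  have ss: "s * s = of_real q" using q unfolding s_def by (simp flip: of_real_mult)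
  have s0: "s \<noteq> 0" using q unfolding s_def by simp
  have q1: "(of_real q :: complex) \<noteq> 1" using q by simp
  note core = qdisc_core[OF pf g0 f0 _ ss s0 q1, unfolded n_def[symmetric]]
  have pw: "g powi (2 * int n - 2) = g ^ (2*n-2)"
  proof -
    have "2 * int n - 2 = int (2*n-2)" using n unfolding n_def by linarith
    then show ?thesis by (simp only: power_int_of_nat)
  qed
  have "qdisc q f = g^(2*n-2) * of_real q^(n*(n-1) div 2) * (\<Prod>j<n. \<Prod>k\<in>{j<..<n}. (s * zs!j - zs!k / s) * (zs!j / s - s * zs!k))"
    unfolding qdisc_def Let_def n_def[symmetric] g_def[symmetric] zs_def[symmetric] s_def[symmetric] pw
    by (simp only: of_real_power)
  also have "\<dots> = (-1)^(n*(n-1) div 2) * g^(n-1) * (\<Prod>j<n. poly f (of_real q * zs!j)) / ((1-of_real q)^n * poly f 0)"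
    by (rule core) (use n n_def in simp)
  finally show ?thesis using zs unfolding g_def n_def by blast
qed

definition qbin :: "real \<Rightarrow> nat \<Rightarrow> nat \<Rightarrow> real" where
  "qbin q n k = (if k \<le> n then qpoch q q n / (qpoch q q k * qpoch q q (n - k)) else 0)"

lemma qpoch_Suc: "qpoch q q (Suc n) = qpoch q q n * (1 - q ^ Suc n)"
  by (simp add: qpoch_def)

lemma qpoch_0 [simp]: "qpoch q q 0 = 1"
  by (simp add: qpoch_def)

lemma qpow_lt1: fixes q :: real assumes "0 < q" "q < 1" shows "q * q ^ k < 1"
proof -
  have "q ^ k \<le> 1" using assms by (intro power_le_one) auto
  then have "q * q ^ k \<le> q" using assms mult_left_le[of "q^k" q] by auto
  then show ?thesis using assms by linarith
qed

lemma qpoch_pos: assumes "0 < q" "q < 1" shows "qpoch q q n > 0"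
proof (induction n)
  case 0 then show ?case by (simp add: qpoch_def)
next
  case (Suc n)
  have "q * q ^ n < 1" by (rule qpow_lt1[OF assms])
  then show ?case using Suc by (simp add: qpoch_Suc)
qed

lemma qbin_0:
  assumes "0 < q" "q < 1" shows "qbin q n 0 = 1"
  using qpoch_pos[OF assms, of n] by (simp add: qbin_def)

lemma qbin_D:
  assumes "0 < q" "q < 1"
  shows "qbin q (Suc m) (Suc k) * (1 - q ^ Suc k) = (1 - q ^ Suc m) * qbin q m k"
proof (cases "k \<le> m")
  case True
  have "q * q ^ k < 1" by (rule qpow_lt1[OF assms])
  then have "1 - q * q ^ k \<noteq> 0" by simp
  moreover have "qpoch q q k > 0" "qpoch q q (m - k) > 0" using qpoch_pos assms by auto
  ultimately show ?thesis using True
    by (simp add: qbin_def qpoch_Suc field_simps)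
qed (simp add: qbin_def)

lemma qbin_pascal:
  assumes "0 < q" "q < 1"
  shows "qbin q (Suc m) (Suc k) = q ^ Suc k * qbin q m (Suc k) + qbin q m k"
proof (cases "k < m")
  case True
  then obtain d where d: "m = Suc (k + d)" by (metis add_Suc_right less_iff_Suc_add)
  have p: "qpoch q q j > 0" for j using qpoch_pos assms by auto
  have e1: "Suc m - Suc k = Suc d" "m - Suc k = d" "m - k = Suc d" using d by auto
  have ab: "q ^ Suc k * q ^ Suc d = q ^ Suc m" using d by (simp add: power_add[symmetric])
  have a1: "1 - q ^ Suc k \<noteq> 0" "1 - q ^ Suc d \<noteq> 0" using qpow_lt1[OF assms, of k] qpow_lt1[OF assms, of d] by auto
  have key: "A*(1 - a*b)/((K*(1-a))*(D*(1-b))) = a * (A/((K*(1-a))*D)) + A/(K*(D*(1-b)))"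
    if "K \<noteq> 0" "D \<noteq> 0" "1-a \<noteq> 0" "1-b \<noteq> 0" for A K D a b :: real
  proof -
    have 1: "a * (A/((K*(1-a))*D)) = (a*(1-b)*A) / ((K*(1-a))*(D*(1-b)))"
      using that by simp
    have 2: "A/(K*(D*(1-b))) = ((1-a)*A) / ((K*(1-a))*(D*(1-b)))"
      using that by simp
    have "a * (A/((K*(1-a))*D)) + A/(K*(D*(1-b))) = (a*(1-b)*A + (1-a)*A) / ((K*(1-a))*(D*(1-b)))"
      unfolding 1 2 by (rule add_divide_distrib[symmetric])
    also have "a*(1-b)*A + (1-a)*A = (a*(1-b) + (1-a)) * A" by (simp add: algebra_simps)
    also have "a*(1-b) + (1-a) = 1 - a*b" by (simp add: algebra_simps)
    finally show ?thesis by simp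
  qed
  have "qbin q (Suc m) (Suc k) = qpoch q q m * (1 - q ^ Suc m) / ((qpoch q q k * (1 - q ^ Suc k)) * (qpoch q q d * (1 - q ^ Suc d)))"
    unfolding qbin_def using True e1 by (simp only: qpoch_Suc if_True Suc_le_mono less_imp_le)
  also have "\<dots> = q ^ Suc k * (qpoch q q m / ((qpoch q q k * (1 - q ^ Suc k)) * qpoch q q d)) + qpoch q q m / (qpoch q q k * (qpoch q q d * (1 - q ^ Suc d)))"
    unfolding ab[symmetric] by (rule key) (use p[of k] p[of d] a1 in auto)
  also have "\<dots> = q ^ Suc k * qbin q m (Suc k) + qbin q m k"
    unfolding qbin_def using True e1 by (simp only: qpoch_Suc if_True Suc_le_eq less_imp_le)
  finally show ?thesis .
next
  case False
  then show ?thesis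
  proof (cases "k = m")
    case True then show ?thesis using qpoch_pos[OF assms, of m] qpoch_pos[OF assms, of "Suc m"] by (simp add: qbin_def)
  qed (use False in \<open>simp add: qbin_def\<close>)
qed

definition hh :: "real \<Rightarrow> nat \<Rightarrow> complex \<Rightarrow> complex" where
  "hh q n x = (\<Sum>k\<le>n. of_real (qbin q n k) * x ^ k)"

context
  fixes q :: real
  assumes q: "0 < q" "q < 1"
begin

lemma hh_ext: "(\<Sum>k\<le>Suc n. of_real (qbin q n k) * x ^ k) = hh q n x"
  by (simp add: hh_def qbin_def)

lemma hhD: "hh q (Suc m) x - hh q (Suc m) (of_real q * x) = of_real (1 - q ^ Suc m) * x * hh q m x"
proof -
  have "hh q (Suc m) x - hh q (Suc m) (of_real q * x)
      = (\<Sum>k\<le>Suc m. of_real (qbin q (Suc m) k) * (x ^ k - (of_real q * x) ^ k))"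
    by (simp add: hh_def sum_subtractf[symmetric] right_diff_distrib)
  also have "\<dots> = (\<Sum>k\<le>Suc m. of_real (qbin q (Suc m) k * (1 - q ^ k)) * x ^ k)"
    by (intro sum.cong refl) (simp add: power_mult_distrib algebra_simps)
  also have "\<dots> = (\<Sum>k\<le>m. of_real (qbin q (Suc m) (Suc k) * (1 - q ^ Suc k)) * x ^ Suc k)"
    by (subst sum.atMost_Suc_shift) simp
  also have "\<dots> = (\<Sum>k\<le>m. of_real ((1 - q ^ Suc m) * qbin q m k) * x ^ Suc k)"
    by (simp only: qbin_D[OF q])
  also have "\<dots> = of_real (1 - q ^ Suc m) * x * hh q m x"
    by (simp add: hh_def sum_distrib_left algebra_simps)
  finally show ?thesis .
qed

lemma hhP: "hh q (Suc m) x = hh q m (of_real q * x) + x * hh q m x"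
proof -
  have "hh q (Suc m) x = of_real (qbin q (Suc m) 0) + (\<Sum>k\<le>m. of_real (qbin q (Suc m) (Suc k)) * x ^ Suc k)"
    unfolding hh_def by (subst sum.atMost_Suc_shift) simp
  also have "\<dots> = 1 + (\<Sum>k\<le>m. of_real (qbin q m (Suc k)) * (of_real q * x) ^ Suc k + x * (of_real (qbin q m k) * x ^ k))"
    by (simp add: qbin_0[OF q] qbin_pascal[OF q] power_mult_distrib algebra_simps)
  also have "\<dots> = 1 + (\<Sum>k\<le>m. of_real (qbin q m (Suc k)) * (of_real q * x) ^ Suc k) + x * hh q m x"
    by (simp add: hh_def sum.distrib sum_distrib_left)
  also have "1 + (\<Sum>k\<le>m. of_real (qbin q m (Suc k)) * (of_real q * x) ^ Suc k) = hh q m (of_real q * x)"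
    by (subst hh_ext[symmetric], subst sum.atMost_Suc_shift) (simp add: qbin_0[OF q])
  finally show ?thesis .
qed

lemma coeff_rs: "coeff (rogers_szego q n) k = (if k \<le> n then of_real (qbin q n k * (1 / sqrt q) ^ k) else 0)"
  unfolding rogers_szego_def coeff_sum coeff_monom
  by (simp add: qbin_def)

lemma qbin_nn: "qbin q n n = 1"
  using qpoch_pos[OF q, of n] by (simp add: qbin_def)

lemma degree_rs: "degree (rogers_szego q n) = n"
  and lead_rs: "lead_coeff (rogers_szego q n) = of_real ((1 / sqrt q) ^ n)"
proof -
  have c: "coeff (rogers_szego q n) n = of_real ((1 / sqrt q) ^ n)"
    by (simp add: coeff_rs qbin_nn)
  have "coeff (rogers_szego q n) n \<noteq> 0" unfolding c using q by simp
  then have "n \<le> degree (rogers_szego q n)" by (rule le_degree)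
  moreover have "degree (rogers_szego q n) \<le> n" by (rule degree_le) (simp add: coeff_rs)
  ultimately show d: "degree (rogers_szego q n) = n" by simp
  show "lead_coeff (rogers_szego q n) = of_real ((1 / sqrt q) ^ n)" unfolding d c ..
qed

lemma rs_nz: "rogers_szego q n \<noteq> 0"
  using lead_rs[of n] q by auto

lemma poly_rs: "poly (rogers_szego q n) z = hh q n (z / of_real (sqrt q))"
  unfolding rogers_szego_def poly_sum poly_monom hh_def
proof (intro sum.cong refl)
  fix k assume "k \<in> {..n}"
  then show "complex_of_real (qpoch q q n * (1 / sqrt q) ^ k / (qpoch q q k * qpoch q q (n - k))) * z ^ k =
         complex_of_real (qbin q n k) * (z / complex_of_real (sqrt q)) ^ k"
    by (simp add: qbin_def power_divide field_simps)
qed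

lemma poly_rs_0: "poly (rogers_szego q n) 0 = 1"
proof -
  have "(\<Sum>k\<le>n. complex_of_real (qbin q n k) * (0::complex) ^ k) = (\<Sum>k\<le>n. if k = 0 then complex_of_real (qbin q n k) else 0)"
    by (intro sum.cong refl) (simp add: power_0_left)
  then show ?thesis unfolding poly_rs hh_def by (simp add: qbin_0[OF q])
qed

lemma PH_D: "poly (rogers_szego q (Suc m)) (of_real q * z)
   = poly (rogers_szego q (Suc m)) z - of_real (1 - q ^ Suc m) * (z / of_real (sqrt q)) * poly (rogers_szego q m) z"
  using hhD[of m "z / of_real (sqrt q)"] unfolding poly_rs by (simp add: algebra_simps)

lemma PH_P: "poly (rogers_szego q (Suc m)) z
   = poly (rogers_szego q m) (of_real q * z) + (z / of_real (sqrt q)) * poly (rogers_szego q m) z"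
  using hhP[of m "z / of_real (sqrt q)"] unfolding poly_rs by (simp add: algebra_simps)

end

lemma swap_prod:
  fixes a b :: "nat \<Rightarrow> complex"
  assumes pf: "\<And>x. poly f x = g * (\<Prod>j<n. x - a j)" and pp: "\<And>x. poly p x = h * (\<Prod>i<m. x - b i)"
  shows "(\<Prod>j<n. poly p (a j)) * g^m = (-1)^(n*m) * (\<Prod>i<m. poly f (b i)) * h^n"
proof -
  have 1: "(\<Prod>j<n. poly p (a j)) = h^n * (\<Prod>j<n. \<Prod>i<m. a j - b i)" by (simp add: pp prod.distrib)
  have 2: "(\<Prod>i<m. poly f (b i)) = g^m * (\<Prod>i<m. \<Prod>j<n. b i - a j)" by (simp add: pf prod.distrib)
  have "(\<Prod>i<m. \<Prod>j<n. b i - a j) = (\<Prod>i<m. \<Prod>j<n. (-1) * (a j - b i))" by simp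
  also have "\<dots> = (\<Prod>i<m. (-1)^n * (\<Prod>j<n. a j - b i))" by (subst prod.distrib) simp
  also have "\<dots> = (-1)^(n*m) * (\<Prod>i<m. \<Prod>j<n. a j - b i)" by (subst prod.distrib) (simp add: power_mult)
  also have "(\<Prod>i<m. \<Prod>j<n. a j - b i) = (\<Prod>j<n. \<Prod>i<m. a j - b i)" by (rule prod.swap)
  finally have 3: "(\<Prod>i<m. \<Prod>j<n. b i - a j) = (-1)^(n*m) * (\<Prod>j<n. \<Prod>i<m. a j - b i)" .
  have 4: "((-1)^(n*m) * (-1)^(n*m) :: complex) = 1" by (simp add: power_mult_distrib[symmetric])
  have 5: "c * (G * (c * X)) * H = (c * c) * (H * X * G)" for c G X H :: complex
    by (simp only: mult_ac)
  show ?thesis unfolding 1 2 3 5 4 by simp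
qed

lemma rootlist_props:
  fixes g :: complex
  assumes f: "f = smult g (\<Prod>z\<leftarrow>zs. [:-z,1:])" and g: "g \<noteq> 0"
  shows "poly f x = g * (\<Prod>j<length zs. x - zs!j)"
    and "j < length zs \<Longrightarrow> poly f (zs!j) = 0"
    and "(\<Prod>j<length zs. zs!j) = (-1)^length zs * poly f 0 / g"
proof -
  show pf: "poly f x = g * (\<Prod>j<length zs. x - zs!j)" for x unfolding f by (rule poly_roots_list)
  show "j < length zs \<Longrightarrow> poly f (zs!j) = 0" unfolding pf
    by (metis diff_self finite_lessThan lessThan_iff mult_zero_right prod_zero_iff)
  have "(\<Prod>j<length zs. 0 - zs!j) = (\<Prod>j<length zs. (-1) * zs!j)" by simp
  also have "\<dots> = (-1)^length zs * (\<Prod>j<length zs. zs!j)" by (subst prod.distrib) simp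
  finally have "poly f 0 = g * ((-1)^length zs * (\<Prod>j<length zs. zs!j))" unfolding pf by simp
  moreover have "((-1)^length zs * (-1)^length zs :: complex) = 1" by (simp add: power_mult_distrib[symmetric])
  moreover have "P = c * F / g" if "F = g * (c * P)" "c * c = 1" for P c F :: complex
  proof -
    have "c * F / g = (c * c) * P" using that(1) g by simp
    then show ?thesis using that(2) by simp
  qed
  ultimately show "(\<Prod>j<length zs. zs!j) = (-1)^length zs * poly f 0 / g" by blast
qed

context
  fixes q :: real
  assumes q: "0 < q" "q < 1"
begin

lemma T_lemma:
  assumes len: "length ws = Suc n"
    and fac: "rogers_szego q (Suc n) = smult (lead_coeff (rogers_szego q (Suc n))) (\<Prod>z\<leftarrow>ws. [:-z,1:])"
  shows "(\<Prod>i<Suc n. poly (rogers_szego q (Suc n)) (of_real q * ws!i))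
       = of_real ((1 - q ^ Suc n) ^ Suc n) * (\<Prod>i<Suc n. poly (rogers_szego q n) (ws!i))"
proof -
  define s where "s = complex_of_real (sqrt q)"
  define c where "c = - complex_of_real (1 - q ^ Suc n) / s"
  have s0: "s \<noteq> 0" using q s_def by simp
  have g: "lead_coeff (rogers_szego q (Suc n)) = (1 / s) ^ Suc n"
    unfolding lead_rs[OF q] s_def by (simp add: power_divide)
  have g0: "(1 / s) ^ Suc n \<noteq> 0" using s0 by simp
  note fac' = fac[unfolded g]
  have each: "poly (rogers_szego q (Suc n)) (of_real q * ws!i) = c * ws!i * poly (rogers_szego q n) (ws!i)"
    if "i < Suc n" for i
  proof -
    have "poly (rogers_szego q (Suc n)) (ws!i) = 0"
      using rootlist_props(2)[OF fac' g0] that len by simp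
    then show ?thesis unfolding PH_D[OF q] c_def s_def by (simp add: divide_simps) (simp add: algebra_simps)
  qed
  have "(\<Prod>i<Suc n. poly (rogers_szego q (Suc n)) (of_real q * ws!i))
      = (\<Prod>i<Suc n. c * ws!i * poly (rogers_szego q n) (ws!i))"
    by (rule prod.cong) (auto simp: each)
  also have "\<dots> = c ^ Suc n * (\<Prod>i<Suc n. ws!i) * (\<Prod>i<Suc n. poly (rogers_szego q n) (ws!i))"
    by (simp add: prod.distrib)
  also have "(\<Prod>i<Suc n. ws!i) = (-1) ^ Suc n * s ^ Suc n"
    using rootlist_props(3)[OF fac' g0] len poly_rs_0[OF q] s0 by (simp add: power_divide)
  also have "c ^ Suc n * ((-1) ^ Suc n * s ^ Suc n) = (c * (-1) * s) ^ Suc n"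
    by (simp only: power_mult_distrib mult.assoc)
  also have "c * (-1) * s = complex_of_real (1 - q ^ Suc n)"
    unfolding c_def using s0 by simp
  finally show ?thesis by (simp only: of_real_power)
qed

lemma poly_rs0: "poly (rogers_szego q 0) x = 1"
  unfolding poly_rs[OF q] hh_def by (simp add: qbin_0[OF q])

lemma lead_pow: "lead_coeff (rogers_szego q n) = (1 / complex_of_real (sqrt q)) ^ n"
  unfolding lead_rs[OF q] by (simp add: power_divide)

lemma R_lemma:
  assumes "length zs = Suc n"
    and "rogers_szego q (Suc n) = smult (lead_coeff (rogers_szego q (Suc n))) (\<Prod>z\<leftarrow>zs. [:-z,1:])"
  shows "(\<Prod>j<Suc n. poly (rogers_szego q n) (zs!j)) = of_real (\<Prod>i\<in>{1..n}. (1 - q^i)^i)"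
  using assms
proof (induction n arbitrary: zs)
  case 0
  then show ?case by (simp add: poly_rs0)
next
  case (Suc n)
  define s where "s = complex_of_real (sqrt q)"
  have s0: "s \<noteq> 0" using q s_def by simp
  obtain ws where ws: "length ws = degree (rogers_szego q (Suc n))"
    "rogers_szego q (Suc n) = smult (lead_coeff (rogers_szego q (Suc n))) (\<Prod>z\<leftarrow>ws. [:-z,1:])"
    using roots_exist[OF rs_nz[OF q]] by blast
  have lw: "length ws = Suc n" using ws(1) degree_rs[OF q] by simp
  have g1: "lead_coeff (rogers_szego q (Suc n)) \<noteq> 0" "lead_coeff (rogers_szego q (Suc (Suc n))) \<noteq> 0"
    using rs_nz[OF q] by auto
  have pf: "poly (rogers_szego q (Suc (Suc n))) x = lead_coeff (rogers_szego q (Suc (Suc n))) * (\<Prod>j<Suc (Suc n). x - zs!j)" for x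
    using rootlist_props(1)[OF Suc.prems(2) g1(2)] Suc.prems(1) by simp
  have pp: "poly (rogers_szego q (Suc n)) x = lead_coeff (rogers_szego q (Suc n)) * (\<Prod>i<Suc n. x - ws!i)" for x
    using rootlist_props(1)[OF ws(2) g1(1)] lw by simp
  note sw = swap_prod[OF pf pp]
  have e: "even (Suc (Suc n) * Suc n)" by simp
  have G: "lead_coeff (rogers_szego q (Suc (Suc n))) ^ Suc n = lead_coeff (rogers_szego q (Suc n)) ^ Suc (Suc n)"
    unfolding lead_pow by (simp only: power_mult[symmetric] mult.commute)
  have G0: "lead_coeff (rogers_szego q (Suc n)) ^ Suc (Suc n) \<noteq> 0" using g1 by simp
  have "(\<Prod>j<Suc (Suc n). poly (rogers_szego q (Suc n)) (zs!j)) = (\<Prod>i<Suc n. poly (rogers_szego q (Suc (Suc n))) (ws!i))"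
    using sw unfolding G using G0 e by simp
  also have "\<dots> = (\<Prod>i<Suc n. poly (rogers_szego q (Suc n)) (of_real q * ws!i))"
  proof (rule prod.cong[OF refl])
    fix i assume "i \<in> {..<Suc n}"
    then have "poly (rogers_szego q (Suc n)) (ws!i) = 0"
      using rootlist_props(2)[OF ws(2) g1(1)] lw by simp
    then show "poly (rogers_szego q (Suc (Suc n))) (ws!i) = poly (rogers_szego q (Suc n)) (of_real q * ws!i)"
      by (subst PH_P[OF q]) simp
  qed
  also have "\<dots> = of_real ((1 - q ^ Suc n) ^ Suc n) * (\<Prod>i<Suc n. poly (rogers_szego q n) (ws!i))"
    by (rule T_lemma[OF lw ws(2)])
  also have "(\<Prod>i<Suc n. poly (rogers_szego q n) (ws!i)) = of_real (\<Prod>i\<in>{1..n}. (1 - q^i)^i)"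
    by (rule Suc.IH[OF lw ws(2)])
  finally show ?case by (simp add: mult.commute)
qed

lemma E_Suc: "(\<Prod>i\<in>{1..Suc m}. (1 - q^i)^i) = (\<Prod>i\<in>{1..m}. (1 - q^i)^i) * (1 - q^Suc m)^Suc m"
  by (simp add: prod.cl_ivl_Suc)

lemma disc_H_aux:
  assumes "length zs = Suc m"
    and "rogers_szego q (Suc m) = smult (lead_coeff (rogers_szego q (Suc m))) (\<Prod>z\<leftarrow>zs. [:-z,1:])"
  shows "(\<Prod>j<Suc m. poly (rogers_szego q (Suc m)) (of_real q * zs!j)) = of_real (\<Prod>i\<in>{1..Suc m}. (1 - q^i)^i)"
  unfolding T_lemma[OF assms] R_lemma[OF assms] E_Suc by (simp add: mult.commute)

lemma E_qp: "(\<Prod>i\<in>{1..Suc m}. (1 - q^i)^i) * (\<Prod>j\<in>{1..m}. qpoch q q j) = qpoch q q (Suc m) ^ Suc m"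
proof (induction m)
  case 0
  then show ?case by (simp add: qpoch_def)
next
  case (Suc m)
  have "(\<Prod>i\<in>{1..Suc (Suc m)}. (1 - q^i)^i) * (\<Prod>j\<in>{1..Suc m}. qpoch q q j)
      = ((\<Prod>i\<in>{1..Suc m}. (1 - q^i)^i) * (\<Prod>j\<in>{1..m}. qpoch q q j)) * (1 - q^Suc (Suc m))^Suc (Suc m) * qpoch q q (Suc m)"
    by (simp only: E_Suc prod.cl_ivl_Suc) (simp add: mult_ac)
  also have "\<dots> = qpoch q q (Suc (Suc m)) ^ Suc (Suc m)"
    unfolding Suc.IH qpoch_Suc[of q "Suc m"] by (simp add: power_mult_distrib mult_ac)
  finally show ?case .
qed

lemma qdisc_H_gen:
  fixes c :: real and m :: nat
  assumes c: "c > 0"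
  defines "N \<equiv> Suc m * m div 2"
  shows "qdisc q (smult (of_real c) (rogers_szego q (Suc m)))
     = of_real (c ^ (2*m) * ((-1)^N * (1/q)^N * (\<Prod>i\<in>{1..Suc m}. (1 - q^i)^i) / (1-q)^Suc m))"
proof -
  define f where "f = smult (complex_of_real c) (rogers_szego q (Suc m))"
  define s where "s = complex_of_real (sqrt q)"
  have s0: "s \<noteq> 0" using q s_def by simp
  have c0: "complex_of_real c \<noteq> 0" using c by simp
  have f0: "f \<noteq> 0" unfolding f_def using c0 rs_nz[OF q] by simp
  have df: "degree f = Suc m" unfolding f_def using c0 degree_rs[OF q] by simp
  have lf: "lead_coeff f = of_real c * (1/s)^Suc m" unfolding f_def s_def lead_pow[symmetric] by simp
  have pf0: "poly f 0 = of_real c" unfolding f_def using poly_rs_0[OF q] by simp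
  obtain zs where zs: "length zs = Suc m" "f = smult (lead_coeff f) (\<Prod>z\<leftarrow>zs. [:-z,1:])"
    and D: "qdisc q f = (-1)^N * lead_coeff f^m * (\<Prod>j<Suc m. poly f (of_real q * zs!j)) / ((1-of_real q)^(Suc m) * poly f 0)"
    using qdisc_formula[OF f0, of q] df pf0 c0 q unfolding N_def by auto
  have fac: "rogers_szego q (Suc m) = smult (lead_coeff (rogers_szego q (Suc m))) (\<Prod>z\<leftarrow>zs. [:-z,1:])"
  proof -
    have "smult (of_real c) (rogers_szego q (Suc m)) = smult (of_real c) (smult (lead_coeff (rogers_szego q (Suc m))) (\<Prod>z\<leftarrow>zs. [:-z,1:]))"
      using zs(2) unfolding lf unfolding f_def lead_pow[symmetric] s_def by simp
    then show ?thesis using c0 by (metis smult_eq_iff)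
  qed
  have P: "(\<Prod>j<Suc m. poly f (of_real q * zs!j)) = of_real c ^ Suc m * of_real (\<Prod>i\<in>{1..Suc m}. (1 - q^i)^i)"
    unfolding f_def poly_smult prod.distrib disc_H_aux[OF zs(1) fac] by simp
  have e: "Suc m * m = 2 * N" unfolding N_def by simp
  have sq: "(complex_of_real (sqrt q))^2 = complex_of_real q" using q by (simp flip: of_real_power)
  have "(1/s)^(Suc m * m) = complex_of_real ((1/q)^N)"
    unfolding e power_mult using q sq by (simp add: s_def power_divide flip: of_real_mult)
  then have L: "lead_coeff f ^ m = of_real c ^ m * complex_of_real ((1/q)^N)"
    unfolding lf by (simp only: power_mult_distrib power_mult[symmetric] mult.commute)
  have "qdisc q f = (-1)^N * (of_real c ^ m * complex_of_real ((1/q)^N)) * (of_real c ^ Suc m * of_real (\<Prod>i\<in>{1..Suc m}. (1 - q^i)^i)) / ((1-of_real q)^(Suc m) * of_real c)"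
    unfolding D L P pf0 ..
  also have "\<dots> = of_real (c ^ (2*m) * ((-1)^N * (1/q)^N * (\<Prod>i\<in>{1..Suc m}. (1 - q^i)^i) / (1-q)^Suc m))"
  proof -
    have gen: "S * (C^m * Qi) * (C^(Suc m) * E) / (W * C) = C^(2*m) * (S * Qi * E / W)"
      if "C \<noteq> 0" for C Qi E W S :: complex
    proof -
      have "C^(Suc m) = C^m * C" by simp
      moreover have "C^(2*m) = C^m * C^m" by (simp add: mult_2 power_add)
      ultimately show ?thesis using that by (simp add: field_simps)
    qed
    have "complex_of_real (c ^ (2*m) * ((-1)^N * (1/q)^N * (\<Prod>i\<in>{1..Suc m}. (1 - q^i)^i) / (1-q)^Suc m))
       = complex_of_real c ^ (2*m) * ((-1)^N * complex_of_real ((1/q)^N) * complex_of_real (\<Prod>i\<in>{1..Suc m}. (1 - q^i)^i) / (1 - complex_of_real q)^Suc m)"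
      by (simp only: of_real_mult of_real_divide of_real_power of_real_minus of_real_1 of_real_diff)
    then show ?thesis using gen[OF c0] by simp
  qed
  finally show ?thesis unfolding f_def .
qed

end

lemma qdisc_deg0: "degree f = 0 \<Longrightarrow> qdisc q f = lead_coeff f powi (-2)"
  unfolding qdisc_def Let_def by simp

context
  fixes q :: real
  assumes q: "0 < q" "q < 1"
begin

lemma F_pos: "(\<Prod>j\<in>{1..m}. qpoch q q j) > 0"
  using qpoch_pos[OF q] by (simp add: prod_pos)

lemma sq_c: "(sqrt q ^ n / sqrt (qpoch q q n))^2 = q^n / qpoch q q n"
proof -
  have "(sqrt q ^ n)^2 = (sqrt q ^ 2)^n" by (simp only: power_mult[symmetric] mult.commute)
  also have "\<dots> = q^n" using q by simp
  finally show ?thesis using qpoch_pos[OF q, of n] by (simp add: power_divide)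
qed

lemma real_final_phi:
  assumes "n = Suc m" "N = n * m div 2"
  shows "(sqrt q ^ n / sqrt (qpoch q q n)) ^ (2*m) * ((-1)^N * (1/q)^N * (\<Prod>i\<in>{1..n}. (1 - q^i)^i) / (1-q)^n)
     = (- q) ^ (n * (n - 1) div 2) / (1 - q) ^ n * qpoch q q n * (\<Prod>j=1..n-1. 1 / qpoch q q j)"
proof -
  define X where "X = qpoch q q n"
  define F where "F = (\<Prod>j\<in>{1..m}. qpoch q q j)"
  define Q where "Q = q ^ N"
  define E where "E = (\<Prod>i\<in>{1..n}. (1 - q^i)^i)"
  define W where "W = (1 - q) ^ n"
  have X0: "X > 0" unfolding X_def using qpoch_pos[OF q] by simp
  have F0: "F > 0" unfolding F_def by (rule F_pos)
  have Q0: "Q > 0" unfolding Q_def using q by simp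
  have W0: "W > 0" unfolding W_def using q by simp
  have EF: "E * F = X ^ n" unfolding E_def F_def X_def assms(1) by (rule E_qp[OF q])
  have e: "n * m = 2 * N" unfolding assms(2) using assms(1) by simp
  have c2: "(sqrt q ^ n / sqrt (qpoch q q n)) ^ (2*m) = Q^2 / X^m"
  proof -
    have "(sqrt q ^ n / sqrt (qpoch q q n)) ^ (2*m) = ((sqrt q ^ n / sqrt (qpoch q q n)) ^ 2) ^ m"
      by (rule power_mult)
    also have "\<dots> = (q^n / X)^m" unfolding sq_c X_def ..
    also have "\<dots> = q^(n*m) / X^m" by (simp add: power_divide power_mult)
    also have "q^(n*m) = Q^2" unfolding e Q_def by (simp add: power_mult mult.commute[of 2])
    finally show ?thesis .
  qed
  have i1: "(1/q)^N = 1/Q" unfolding Q_def by (simp add: power_divide)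
  have i2: "(-q)^N = (-1)^N * Q" unfolding Q_def by (simp flip: power_mult_distrib)
  have i3: "(\<Prod>j=1..n-1. 1 / qpoch q q j) = 1 / F" unfolding F_def assms(1)
    by (simp add: prod_dividef)
  have Xn: "X^n = X^m * X" unfolding assms(1) by simp
  have E': "E = X^m * X / F" using EF F0 Xn by (simp add: field_simps)
  have nm: "n * (n - 1) div 2 = N" using assms by simp
  show ?thesis unfolding c2 unfolding i1 nm i2 i3 E_def[symmetric] W_def[symmetric] X_def[symmetric] E'
    using X0 F0 Q0 W0 by (simp add: field_simps power2_eq_square)
qed

lemma real_final_H:
  assumes "n = Suc m" "N = n * m div 2"
  shows "1 ^ (2*m) * ((-1)^N * (1/q)^N * (\<Prod>i\<in>{1..n}. (1 - q^i)^i) / (1-q)^n)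
     = 1 / (- q) ^ (n * (n - 1) div 2) * (qpoch q q n / (1 - q)) ^ n * (\<Prod>j=1..n-1. 1 / qpoch q q j)"
proof -
  define X where "X = qpoch q q n"
  define F where "F = (\<Prod>j\<in>{1..m}. qpoch q q j)"
  define Q where "Q = q ^ N"
  define E where "E = (\<Prod>i\<in>{1..n}. (1 - q^i)^i)"
  define W where "W = (1 - q) ^ n"
  have X0: "X > 0" unfolding X_def using qpoch_pos[OF q] by simp
  have F0: "F > 0" unfolding F_def by (rule F_pos)
  have Q0: "Q > 0" unfolding Q_def using q by simp
  have W0: "W > 0" unfolding W_def using q by simp
  have EF: "E * F = X ^ n" unfolding E_def F_def X_def assms(1) by (rule E_qp[OF q])
  have i1: "(1/q)^N = 1/Q" unfolding Q_def by (simp add: power_divide)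
  have i2: "(-q)^N = (-1)^N * Q" unfolding Q_def by (simp flip: power_mult_distrib)
  have i3: "(\<Prod>j=1..n-1. 1 / qpoch q q j) = 1 / F" unfolding F_def assms(1)
    by (simp add: prod_dividef)
  have E': "E = X^n / F" using EF F0 by (simp add: field_simps)
  have nm: "n * (n - 1) div 2 = N" using assms by simp
  have pw: "(X / (1 - q)) ^ n = X^n / W" unfolding W_def by (simp add: power_divide)
  have m1: "((-1::real)^N) * (-1)^N = 1" by (simp flip: power_mult_distrib)
  show ?thesis unfolding i1 nm i2 i3 E_def[symmetric] W_def[symmetric] X_def[symmetric] E' pw
    using X0 F0 Q0 W0 m1 by (simp add: field_simps)
qed

lemma qder_part:
  assumes "n \<ge> 1" "z \<noteq> 0"
  shows "qder (complex_of_real q) (poly (rs_phi q n)) z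
              = complex_of_real (sqrt (1 - q ^ n) / (1 - q)) * poly (rs_phi q (n - 1)) z"
proof -
  obtain m where n: "n = Suc m" using assms(1) by (cases n) auto
  define cn where "cn = sqrt q ^ Suc m / sqrt (qpoch q q (Suc m))"
  define cm where "cm = sqrt q ^ m / sqrt (qpoch q q m)"
  define A where "A = sqrt (1 - q ^ Suc m)"
  have qq: "q * q ^ m < 1" by (rule qpow_lt1[OF q])
  have A0: "A > 0" unfolding A_def using qq by simp
  have A2: "A * A = 1 - q ^ Suc m" unfolding A_def using qq by simp
  have qm: "qpoch q q m > 0" by (rule qpoch_pos[OF q])
  have sq0: "sqrt q > 0" using q by simp
  have cn': "cn = sqrt q * cm / A"
    unfolding cn_def cm_def A_def qpoch_Suc real_sqrt_mult using qm qq by simp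
  have key: "cn * (1 - q ^ Suc m) / (sqrt q * (1 - q)) = sqrt (1 - q ^ Suc m) / (1 - q) * cm"
    unfolding cn' A2[symmetric] A_def[symmetric] using A0 sq0 q by (simp add: field_simps)
  have pphi: "poly (rs_phi q k) x = complex_of_real (sqrt q ^ k / sqrt (qpoch q q k)) * poly (rogers_szego q k) x" for k x
    unfolding rs_phi_def by simp
  have z1: "z - complex_of_real q * z = z * complex_of_real (1 - q)" by (simp add: algebra_simps)
  have q1: "complex_of_real (1 - q) \<noteq> 0" using q by simp
  have "qder (complex_of_real q) (poly (rs_phi q n)) z
      = of_real cn * (poly (rogers_szego q (Suc m)) z - poly (rogers_szego q (Suc m)) (of_real q * z)) / (z * complex_of_real (1 - q))"
    unfolding qder_def pphi n cn_def[symmetric] z1 by (simp only: right_diff_distrib)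
  also have "\<dots> = of_real cn * (of_real (1 - q ^ Suc m) * (z / of_real (sqrt q)) * poly (rogers_szego q m) z) / (z * complex_of_real (1 - q))"
    unfolding PH_D[OF q] by simp
  also have "\<dots> = of_real (cn * (1 - q ^ Suc m) / (sqrt q * (1 - q))) * poly (rogers_szego q m) z"
    using assms(2) q1 sq0 by (simp add: field_simps)
  also have "\<dots> = complex_of_real (sqrt (1 - q ^ n) / (1 - q)) * poly (rs_phi q (n - 1)) z"
    unfolding key pphi n cm_def by simp
  finally show ?thesis .
qed

end

theorem mainTheorem10:
  fixes q :: real
  assumes "0 < q" and "q < 1"
  shows "(\<forall>n\<ge>1. \<forall>z::complex. z \<noteq> 0 \<longrightarrow>
            qder (complex_of_real q) (poly (rs_phi q n)) z
              = complex_of_real (sqrt (1 - q ^ n) / (1 - q)) * poly (rs_phi q (n - 1)) z)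
       \<and> (\<forall>n. qdisc q (rs_phi q n) = complex_of_real
            ((- q) ^ (n * (n - 1) div 2) / (1 - q) ^ n * qpoch q q n
              * (\<Prod>j=1..n-1. 1 / qpoch q q j)))
       \<and> (\<forall>n. qdisc q (rogers_szego q n) = complex_of_real
            (1 / (- q) ^ (n * (n - 1) div 2) * (qpoch q q n / (1 - q)) ^ n
              * (\<Prod>j=1..n-1. 1 / qpoch q q j)))"
proof (intro conjI allI impI)
  note q = assms
  show "qder (complex_of_real q) (poly (rs_phi q n)) z
              = complex_of_real (sqrt (1 - q ^ n) / (1 - q)) * poly (rs_phi q (n - 1)) z"
    if "n \<ge> 1" "z \<noteq> 0" for n z
    by (rule qder_part[OF q that])
  show "qdisc q (rs_phi q n) = complex_of_real
            ((- q) ^ (n * (n - 1) div 2) / (1 - q) ^ n * qpoch q q n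
              * (\<Prod>j=1..n-1. 1 / qpoch q q j))" for n
  proof (cases n)
    case 0
    have "degree (rs_phi q 0) = 0" unfolding rs_phi_def using degree_rs[OF q, of 0] by simp
    moreover have "lead_coeff (rs_phi q 0) = 1" unfolding rs_phi_def using lead_rs[OF q, of 0] by simp
    ultimately show ?thesis using 0 by (simp add: qdisc_deg0)
  next
    case (Suc m)
    define c where "c = sqrt q ^ Suc m / sqrt (qpoch q q (Suc m))"
    have c0: "c > 0" unfolding c_def using q qpoch_pos[OF q] by simp
    have eq: "rs_phi q n = smult (of_real c) (rogers_szego q (Suc m))" unfolding rs_phi_def Suc c_def ..
    have "qdisc q (rs_phi q n) = of_real (c ^ (2*m) * ((-1)^(Suc m * m div 2) * (1/q)^(Suc m * m div 2) * (\<Prod>i\<in>{1..Suc m}. (1 - q^i)^i) / (1-q)^Suc m))"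
      unfolding eq by (rule qdisc_H_gen[OF q c0])
    also have "\<dots> = complex_of_real
            ((- q) ^ (Suc m * (Suc m - 1) div 2) / (1 - q) ^ Suc m * qpoch q q (Suc m)
              * (\<Prod>j=1..Suc m-1. 1 / qpoch q q j))"
      unfolding c_def by (subst real_final_phi[OF q refl refl]) (rule refl)
    finally show ?thesis unfolding Suc .
  qed
  show "qdisc q (rogers_szego q n) = complex_of_real
            (1 / (- q) ^ (n * (n - 1) div 2) * (qpoch q q n / (1 - q)) ^ n
              * (\<Prod>j=1..n-1. 1 / qpoch q q j))" for n
  proof (cases n)
    case 0
    have "degree (rogers_szego q 0) = 0" using degree_rs[OF q, of 0] by simp
    moreover have "lead_coeff (rogers_szego q 0) = 1" using lead_rs[OF q, of 0] by simp
    ultimately show ?thesis using 0 by (simp add: qdisc_deg0)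
  next
    case (Suc m)
    have c0: "(1::real) > 0" by simp
    have eq: "rogers_szego q n = smult (of_real 1) (rogers_szego q (Suc m))" unfolding Suc by simp
    have "qdisc q (rogers_szego q n) = of_real (1 ^ (2*m) * ((-1)^(Suc m * m div 2) * (1/q)^(Suc m * m div 2) * (\<Prod>i\<in>{1..Suc m}. (1 - q^i)^i) / (1-q)^Suc m))"
      unfolding eq by (rule qdisc_H_gen[OF q c0])
    also have "\<dots> = complex_of_real
            (1 / (- q) ^ (Suc m * (Suc m - 1) div 2) * (qpoch q q (Suc m) / (1 - q)) ^ Suc m
              * (\<Prod>j=1..Suc m-1. 1 / qpoch q q j))"
      by (subst real_final_H[OF q refl refl]) (rule refl)
    finally show ?thesis unfolding Suc .
  qed
qed

end
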